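(* Let $0<\gamma<\frac n2$ and $1\leq k<\frac n2-\gamma$, let $a_0=\frac{n-k-2}{2}$, and define $$\Theta(a,b)=4^\gamma\frac{\Gamma\big(\frac{1+\gamma}{2}+\frac{a+bi}{2}\big)}{\Gamma\big(\frac{1-\gamma}{2}+\frac{a+bi}{2}\big)}\,\frac{\Gamma\big(\frac{1+\gamma}{2}+\frac{a-bi}{2}\big)}{\Gamma\big(\frac{1-\gamma}{2}+\frac{a-bi}{2}\big)}.$$ Then: (i) $\frac{\partial\Theta}{\partial a}(a,\beta i)>0$ for all $a\geq a_0$ and $0<\beta\leq\frac k2$; (ii) $\frac{\partial\Theta}{\partial\beta}(a,\beta i)<0$ for all $a\geq a_0$ and $0<\beta\leq\frac k2$; (iii) $\frac{\partial\Theta}{\partial b}(a,b)>0$ for all $a\geq a_0$ and real $b>0$.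
   Context: For $a\geq a_0$ and $b$ either purely imaginary with $|b|\leq\frac k2$ or real, $\Theta(a,b)$ is a positive real number. *)

theory Defs
  imports "HOL-Analysis.Analysis"
begin

definition Theta :: "real \<Rightarrow> real \<Rightarrow> complex \<Rightarrow> complex" where
  "Theta \<gamma> a b =
     of_real (4 powr \<gamma>) *
     (Gamma ((1 + \<gamma>) / 2 + (of_real a + b * \<i>) / 2) / Gamma ((1 - \<gamma>) / 2 + (of_real a + b * \<i>) / 2)) *
     (Gamma ((1 + \<gamma>) / 2 + (of_real a - b * \<i>) / 2) / Gamma ((1 - \<gamma>) / 2 + (of_real a - b * \<i>) / 2))"

end

theory Submission imports Defs begin

lemma dg_sums:
  fixes z1 z2 :: "'a::{real_normed_field,banach}"
  assumes "z1 \<noteq> 0" "z2 \<noteq> 0"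
  shows "(\<lambda>k. inverse (z2 + of_nat k) - inverse (z1 + of_nat k)) sums (Digamma z1 - Digamma z2)"
proof -
  have s: "(\<lambda>k. inverse (of_nat (Suc k)) - inverse (z + of_nat k)) sums (Digamma z + euler_mascheroni)"
    if "z \<noteq> 0" for z :: 'a
    using summable_Digamma[OF that] by (simp add: Digamma_def summable_sums)
  from sums_diff[OF s[OF assms(1)] s[OF assms(2)]] show ?thesis by simp
qed

lemma term_dec:
  fixes p q g :: real
  assumes "0 < p" "p < q" "0 < g"
  shows "inverse q - inverse (q + g) < inverse p - inverse (p + g)"
proof -
  have e: "inverse r - inverse (r + g) = g / (r * (r + g))" if "r > 0" for r
    using that assms by (simp add: field_simps)
  have "p * (p + g) < q * (q + g)" using assms by (intro mult_strict_mono) auto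
  hence "g / (q * (q + g)) < g / (p * (p + g))" using assms
    by (intro divide_strict_left_mono) auto
  thus ?thesis using e[of p] e[of q] assms by simp
qed

lemma h_dec:
  fixes u v g :: real
  assumes "0 < u" "u < v" "0 < g"
  shows "Digamma (v + g) - Digamma v < Digamma (u + g) - Digamma u"
proof -
  have su: "(\<lambda>k. inverse (u + of_nat k) - inverse (u + g + of_nat k)) sums (Digamma (u+g) - Digamma u)"
    using dg_sums[of "u+g" u] assms by simp
  have sv: "(\<lambda>k. inverse (v + of_nat k) - inverse (v + g + of_nat k)) sums (Digamma (v+g) - Digamma v)"
    using dg_sums[of "v+g" v] assms by simp
  have sd: "(\<lambda>k. (inverse (u + of_nat k) - inverse (u + g + of_nat k)) - (inverse (v + of_nat k) - inverse (v + g + of_nat k)))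
     sums ((Digamma (u+g) - Digamma u) - (Digamma (v+g) - Digamma v))"
    by (rule sums_diff[OF su sv])
  have "0 < suminf (\<lambda>k. (inverse (u + of_nat k) - inverse (u + g + of_nat k)) - (inverse (v + of_nat k) - inverse (v + g + of_nat k)))"
  proof (rule suminf_pos[OF sums_summable[OF sd]])
    fix k :: nat
    have "inverse (v + real k) - inverse (v + real k + g) < inverse (u + real k) - inverse (u + real k + g)"
      using assms by (intro term_dec) auto
    thus "0 < (inverse (u + of_nat k) - inverse (u + g + of_nat k)) - (inverse (v + of_nat k) - inverse (v + g + of_nat k))"
      by (simp add: add_ac)
  qed
  thus ?thesis using sums_unique[OF sd] by simp
qed

lemma im_neg:
  fixes x g Y :: real
  assumes "0 < x" "0 < g" "Y \<noteq> 0"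
  shows "Y * Im (Digamma (Complex (x+g) Y) - Digamma (Complex x Y)) < 0"
proof -
  have s: "(\<lambda>k. inverse (Complex x Y + of_nat k) - inverse (Complex (x+g) Y + of_nat k)) sums
        (Digamma (Complex (x+g) Y) - Digamma (Complex x Y))"
    using dg_sums[of "Complex (x+g) Y" "Complex x Y"] assms by (simp add: complex_eq_iff)
  hence s2: "(\<lambda>k. Y * Im (inverse (Complex x Y + of_nat k) - inverse (Complex (x+g) Y + of_nat k))) sums
        (Y * Im (Digamma (Complex (x+g) Y) - Digamma (Complex x Y)))"
    by (intro sums_mult sums_Im)
  have "0 < suminf (\<lambda>k. - (Y * Im (inverse (Complex x Y + of_nat k) - inverse (Complex (x+g) Y + of_nat k))))"
  proof (rule suminf_pos[OF summable_minus[OF sums_summable[OF s2]]])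
    fix k :: nat
    have e: "Im (inverse (Complex r Y + of_nat k)) = - Y / ((r + real k)^2 + Y^2)" for r
      by (simp add: Im_divide power2_eq_square inverse_eq_divide)
    have pos: "0 < (x + real k)^2 + Y^2" using assms by (simp add: add_pos_nonneg)
    have lt: "(x + real k)^2 + Y^2 < (x + g + real k)^2 + Y^2"
      using assms by (intro add_strict_right_mono power_strict_mono) auto
    have "Y^2 / ((x + g + real k)^2 + Y^2) < Y^2 / ((x + real k)^2 + Y^2)"
      using assms pos lt by (intro divide_strict_left_mono) auto
    thus "0 < - (Y * Im (inverse (Complex x Y + of_nat k) - inverse (Complex (x+g) Y + of_nat k)))"
      by (simp add: e power2_eq_square algebra_simps)
  qed
  moreover note suminf_minus[OF sums_summable[OF s2]]
  moreover note sums_unique[OF s2]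
  ultimately show ?thesis by linarith
qed


definition Pf :: "real \<Rightarrow> real \<Rightarrow> real" where
  "Pf g t = Gamma ((1+g)/2 + t/2) / Gamma ((1-g)/2 + t/2)"

lemma not_npi_real: "(x::real) > 0 \<Longrightarrow> x \<notin> \<int>\<^sub>\<le>\<^sub>0"
  using nonpos_Ints_nonpos by force

lemma not_npi_cx: "Re (z::complex) > 0 \<Longrightarrow> z \<notin> \<int>\<^sub>\<le>\<^sub>0"
  by (auto elim!: nonpos_Ints_cases')

lemma theta_imag:
  "Theta g x (of_real y * \<i>) = of_real (4 powr g * Pf g (x - y) * Pf g (x + y))"
proof -
  have e1: "(1 + complex_of_real g)/2 + (of_real x + of_real y * \<i> * \<i>)/2 = of_real ((1+g)/2 + (x-y)/2)"
    by (simp add: complex_eq_iff)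
  have e2: "(1 - complex_of_real g)/2 + (of_real x + of_real y * \<i> * \<i>)/2 = of_real ((1-g)/2 + (x-y)/2)"
    by (simp add: complex_eq_iff)
  have e3: "(1 + complex_of_real g)/2 + (of_real x - of_real y * \<i> * \<i>)/2 = of_real ((1+g)/2 + (x+y)/2)"
    by (simp add: complex_eq_iff)
  have e4: "(1 - complex_of_real g)/2 + (of_real x - of_real y * \<i> * \<i>)/2 = of_real ((1-g)/2 + (x+y)/2)"
    by (simp add: complex_eq_iff)
  show ?thesis unfolding Theta_def e1 e2 e3 e4 Gamma_complex_of_real Pf_def by simp
qed

lemma Pf_pos: assumes "0 < (1-g)/2 + t/2" "0 < g" shows "Pf g t > 0"
proof -
  have "(1+g)/2 + t/2 = ((1-g)/2 + t/2) + g" by (simp add: field_simps)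
  hence p1: "0 < (1+g)/2 + t/2" using assms by linarith
  thus ?thesis unfolding Pf_def using assms by (intro divide_pos_pos Gamma_real_pos) auto
qed

lemma Pf_deriv:
  assumes "0 < (1-g)/2 + t/2" "0 < g"
  shows "(Pf g has_real_derivative Pf g t * (Digamma ((1+g)/2 + t/2) - Digamma ((1-g)/2 + t/2)) / 2) (at t)"
proof -
  have "(1+g)/2 + t/2 = ((1-g)/2 + t/2) + g" by (simp add: field_simps)
  hence p1: "0 < (1+g)/2 + t/2" using assms by linarith
  have n1: "(1+g)/2 + t/2 \<notin> \<int>\<^sub>\<le>\<^sub>0" using p1 by (intro not_npi_real)
  have n2: "(1-g)/2 + t/2 \<notin> \<int>\<^sub>\<le>\<^sub>0" using assms by (intro not_npi_real) auto
  have g2: "Gamma ((1-g)/2 + t/2) \<noteq> (0::real)" using n2 by (rule Gamma_nonzero)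
  define A where "A = (1+g)/2 + t/2"
  define B where "B = (1-g)/2 + t/2"
  have d1: "((\<lambda>t. Gamma ((1+g)/2 + t/2)) has_real_derivative Gamma A * Digamma A * (1/2)) (at t)"
    unfolding A_def by (rule derivative_eq_intros refl has_field_derivative_Gamma n1 | simp)+
  have d2: "((\<lambda>t. Gamma ((1-g)/2 + t/2)) has_real_derivative Gamma B * Digamma B * (1/2)) (at t)"
    unfolding B_def by (rule derivative_eq_intros refl has_field_derivative_Gamma n2 | simp)+
  have g2': "Gamma B \<noteq> 0" using g2 B_def by simp
  have aux: "(a*c*(1/2)*b - a*(b*d*(1/2)))/(b*b) = a/b*(c-d)/2" if "b \<noteq> 0" for a b c d :: real
    using that by (simp add: field_simps)
  have "((\<lambda>t. Gamma ((1+g)/2 + t/2) / Gamma ((1-g)/2 + t/2)) has_real_derivative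
      Gamma A / Gamma B * (Digamma A - Digamma B) / 2) (at t)"
    using DERIV_divide[OF d1 d2] g2 aux[OF g2'] unfolding A_def B_def by simp
  thus ?thesis unfolding Pf_def[abs_def] A_def B_def .
qed


lemma real_parts:
  assumes g: "0 < g" and u1: "0 < (1-g)/2 + (x-y)/2" and u2: "0 < (1-g)/2 + (x+y)/2" and y: "0 < y"
  shows "\<exists>D. ((\<lambda>x. Re (Theta g x (of_real y * \<i>))) has_real_derivative D) (at x) \<and> D > 0"
    and "\<exists>D. ((\<lambda>y. Re (Theta g x (of_real y * \<i>))) has_real_derivative D) (at y) \<and> D < 0"
proof -
  define hD where "hD t = Digamma ((1+g)/2 + t/2) - Digamma ((1-g)/2 + t/2 :: real)" for t
  have fe: "Re (Theta g x' (of_real y' * \<i>)) = 4 powr g * Pf g (x' - y') * Pf g (x' + y')" for x' y'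
    by (simp add: theta_imag)
  have dA: "(Pf g has_real_derivative Pf g (x-y) * hD (x-y) / 2) (at (x-y))"
    using Pf_deriv[OF u1 g] unfolding hD_def .
  have dB: "(Pf g has_real_derivative Pf g (x+y) * hD (x+y) / 2) (at (x+y))"
    using Pf_deriv[OF u2 g] unfolding hD_def .
  have A: "Pf g (x-y) > 0" using Pf_pos[OF u1 g] .
  have B: "Pf g (x+y) > 0" using Pf_pos[OF u2 g] .
  have hA: "hD (x-y) > 0" unfolding hD_def using u1 g by (intro diff_gt_0_iff_gt[THEN iffD2] Digamma_real_strict_mono) auto
  have hB: "hD (x+y) > 0" unfolding hD_def using u2 g by (intro diff_gt_0_iff_gt[THEN iffD2] Digamma_real_strict_mono) auto
  have hAB: "hD (x+y) < hD (x-y)"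
  proof -
    have "Digamma ((1-g)/2 + (x+y)/2 + g) - Digamma ((1-g)/2 + (x+y)/2) <
          Digamma ((1-g)/2 + (x-y)/2 + g) - Digamma ((1-g)/2 + (x-y)/2)"
      using u1 y g by (intro h_dec) auto
    moreover have eqs: "(1-g)/2 + (x+y)/2 + g = (1+g)/2 + (x+y)/2" "(1-g)/2 + (x-y)/2 + g = (1+g)/2 + (x-y)/2"
      by (simp_all add: field_simps)
    ultimately show ?thesis unfolding hD_def by (simp only: eqs)
  qed
  have dx1: "((\<lambda>x. Pf g (x - y)) has_real_derivative Pf g (x-y) * hD (x-y) / 2 * 1) (at x)"
    by (rule DERIV_chain2[where g="\<lambda>x. x - y", OF dA]) (auto intro!: derivative_eq_intros)
  have dx2: "((\<lambda>x. Pf g (x + y)) has_real_derivative Pf g (x+y) * hD (x+y) / 2 * 1) (at x)"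
    by (rule DERIV_chain2[where g="\<lambda>x. x + y", OF dB]) (auto intro!: derivative_eq_intros)
  have dy1: "((\<lambda>y. Pf g (x - y)) has_real_derivative Pf g (x-y) * hD (x-y) / 2 * (-1)) (at y)"
    by (rule DERIV_chain2[where g="\<lambda>y. x - y", OF dA]) (auto intro!: derivative_eq_intros)
  have dy2: "((\<lambda>y. Pf g (x + y)) has_real_derivative Pf g (x+y) * hD (x+y) / 2 * 1) (at y)"
    by (rule DERIV_chain2[where g="\<lambda>y. x + y", OF dB]) (auto intro!: derivative_eq_intros)
  have DX0: "((\<lambda>x. 4 powr g * (Pf g (x-y) * Pf g (x+y))) has_real_derivative
     4 powr g * (Pf g (x-y) * Pf g (x+y)) * (hD (x-y) + hD (x+y)) / 2) (at x)"
    by (rule DERIV_cong[OF DERIV_cmult[OF DERIV_mult[OF dx1 dx2]]]) (simp add: algebra_simps)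
  have DX: "((\<lambda>x. Re (Theta g x (of_real y * \<i>))) has_real_derivative
     4 powr g * (Pf g (x-y) * Pf g (x+y)) * (hD (x-y) + hD (x+y)) / 2) (at x)"
    using DX0 by (simp add: fe mult.assoc)
  have DY0: "((\<lambda>y. 4 powr g * (Pf g (x-y) * Pf g (x+y))) has_real_derivative
     4 powr g * (Pf g (x-y) * Pf g (x+y)) * (hD (x+y) - hD (x-y)) / 2) (at y)"
    by (rule DERIV_cong[OF DERIV_cmult[OF DERIV_mult[OF dy1 dy2]]]) (simp add: algebra_simps)
  have DY: "((\<lambda>y. Re (Theta g x (of_real y * \<i>))) has_real_derivative
     4 powr g * (Pf g (x-y) * Pf g (x+y)) * (hD (x+y) - hD (x-y)) / 2) (at y)"
    using DY0 by (simp add: fe mult.assoc)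
  have "4 powr g * (Pf g (x-y) * Pf g (x+y)) * (hD (x-y) + hD (x+y)) / 2 > 0"
    using A B hA hB by (intro divide_pos_pos mult_pos_pos) auto
  then show "\<exists>D. ((\<lambda>x. Re (Theta g x (of_real y * \<i>))) has_real_derivative D) (at x) \<and> D > 0"
    using DX by auto
  have "4 powr g * (Pf g (x-y) * Pf g (x+y)) * (hD (x+y) - hD (x-y)) / 2 < 0"
    using A B hAB by (intro divide_neg_pos mult_pos_neg) auto
  then show "\<exists>D. ((\<lambda>y. Re (Theta g x (of_real y * \<i>))) has_real_derivative D) (at y) \<and> D < 0"
    using DY by auto
qed


lemma complex_part:
  assumes g: "0 < g" and x0: "0 < (1-g)/2 + a/2" and b: "0 < b"
  shows "\<exists>D. ((\<lambda>y. Re (Theta g a (of_real y))) has_real_derivative D) (at b) \<and> D > 0"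
proof -
  define P1 where "P1 z = (1 + complex_of_real g)/2 + (of_real a + z * \<i>)/2" for z
  define M1 where "M1 z = (1 - complex_of_real g)/2 + (of_real a + z * \<i>)/2" for z
  define P2 where "P2 z = (1 + complex_of_real g)/2 + (of_real a - z * \<i>)/2" for z
  define M2 where "M2 z = (1 - complex_of_real g)/2 + (of_real a - z * \<i>)/2" for z
  define x where "x = (1-g)/2 + a/2"
  define Y where "Y = b/2"
  define z0 where "z0 = complex_of_real b"
  have Y: "Y > 0" using b Y_def by simp
  have x: "x > 0" using x0 x_def by simp
  have eP1: "P1 z0 = Complex (x+g) Y" unfolding P1_def z0_def x_def Y_def by (simp add: complex_eq_iff field_simps)
  have eM1: "M1 z0 = Complex x Y" unfolding M1_def z0_def x_def Y_def by (simp add: complex_eq_iff field_simps)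
  have eP2: "P2 z0 = Complex (x+g) (-Y)" unfolding P2_def z0_def x_def Y_def by (simp add: complex_eq_iff field_simps)
  have eM2: "M2 z0 = Complex x (-Y)" unfolding M2_def z0_def x_def Y_def by (simp add: complex_eq_iff field_simps)
  have nP1: "P1 z0 \<notin> \<int>\<^sub>\<le>\<^sub>0" using eP1 x g by (intro not_npi_cx) simp
  have nM1: "M1 z0 \<notin> \<int>\<^sub>\<le>\<^sub>0" using eM1 x g by (intro not_npi_cx) simp
  have nP2: "P2 z0 \<notin> \<int>\<^sub>\<le>\<^sub>0" using eP2 x g by (intro not_npi_cx) simp
  have nM2: "M2 z0 \<notin> \<int>\<^sub>\<le>\<^sub>0" using eM2 x g by (intro not_npi_cx) simp
  have gM1: "Gamma (M1 z0) \<noteq> 0" using nM1 by (rule Gamma_nonzero)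
  have gM2: "Gamma (M2 z0) \<noteq> 0" using nM2 by (rule Gamma_nonzero)
  have gP1: "Gamma (P1 z0) \<noteq> 0" using nP1 by (rule Gamma_nonzero)
  have dP1: "((\<lambda>z. Gamma (P1 z)) has_field_derivative Gamma (P1 z0) * Digamma (P1 z0) * (\<i>/2)) (at z0)"
    by (rule DERIV_chain2[where g=P1, OF has_field_derivative_Gamma[OF nP1]])
       (unfold P1_def, auto intro!: derivative_eq_intros)
  have dM1: "((\<lambda>z. Gamma (M1 z)) has_field_derivative Gamma (M1 z0) * Digamma (M1 z0) * (\<i>/2)) (at z0)"
    by (rule DERIV_chain2[where g=M1, OF has_field_derivative_Gamma[OF nM1]])
       (unfold M1_def, auto intro!: derivative_eq_intros)
  have dP2: "((\<lambda>z. Gamma (P2 z)) has_field_derivative Gamma (P2 z0) * Digamma (P2 z0) * (-\<i>/2)) (at z0)"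
    by (rule DERIV_chain2[where g=P2, OF has_field_derivative_Gamma[OF nP2]])
       (unfold P2_def, auto intro!: derivative_eq_intros)
  have dM2: "((\<lambda>z. Gamma (M2 z)) has_field_derivative Gamma (M2 z0) * Digamma (M2 z0) * (-\<i>/2)) (at z0)"
    by (rule DERIV_chain2[where g=M2, OF has_field_derivative_Gamma[OF nM2]])
       (unfold M2_def, auto intro!: derivative_eq_intros)
  define q1 where "q1 = Gamma (P1 z0) / Gamma (M1 z0)"
  define q2 where "q2 = Gamma (P2 z0) / Gamma (M2 z0)"
  define S1 where "S1 = Digamma (P1 z0) - Digamma (M1 z0)"
  define S2 where "S2 = Digamma (P2 z0) - Digamma (M2 z0)"
  have auxq: "(p*c*e*m - p*(m*d*e))/(m*m) = p/m*(c-d)*e" if "m \<noteq> 0" for p m c d e :: complex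
    using that by (simp add: field_simps)
  have dq1: "((\<lambda>z. Gamma (P1 z) / Gamma (M1 z)) has_field_derivative q1 * S1 * (\<i>/2)) (at z0)"
    unfolding q1_def S1_def by (rule DERIV_cong[OF DERIV_divide[OF dP1 dM1 gM1]], rule auxq[OF gM1])
  have dq2: "((\<lambda>z. Gamma (P2 z) / Gamma (M2 z)) has_field_derivative q2 * S2 * (-\<i>/2)) (at z0)"
    unfolding q2_def S2_def by (rule DERIV_cong[OF DERIV_divide[OF dP2 dM2 gM2]], rule auxq[OF gM2])
  define T' where "T' = of_real (4 powr g) * q1 * q2 * (\<i>/2 * (S1 - S2))"
  have thf: "(\<lambda>z. Theta g a z) = (\<lambda>z. of_real (4 powr g) * ((Gamma (P1 z) / Gamma (M1 z)) * (Gamma (P2 z) / Gamma (M2 z))))"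
    unfolding Theta_def P1_def M1_def P2_def M2_def by (simp add: mult.assoc)
  have dT: "((\<lambda>z. Theta g a z) has_field_derivative T') (at z0)"
    unfolding thf T'_def
    by (rule DERIV_cong[OF DERIV_cmult[OF DERIV_mult[OF dq1 dq2]]]) (simp add: algebra_simps q1_def q2_def diff_divide_distrib)
  have dR: "((\<lambda>y. Re (Theta g a (of_real y))) has_real_derivative Re T') (at b)"
    using has_field_derivative_Re[OF has_vector_derivative_real_field[OF dT[unfolded z0_def]]] .
  have cq: "q2 = cnj q1" unfolding q1_def q2_def eP1 eM1 eP2 eM2
    by (simp add: cnj_Gamma complex_cnj_divide complex_cnj)
  have q1nz: "q1 \<noteq> 0" unfolding q1_def using gP1 gM1 by simp
  have qq: "q1 * q2 = of_real ((cmod q1)^2)" unfolding cq by (rule complex_norm_square[symmetric])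
  have i1: "Y * Im S1 < 0" unfolding S1_def eP1 eM1 using im_neg[OF x g] Y by simp
  have i2: "(-Y) * Im S2 < 0" unfolding S2_def eP2 eM2 using im_neg[OF x g, of "-Y"] Y by simp
  have s1: "Im S1 < 0" using i1 Y by (simp add: mult_less_0_iff)
  have s2: "Im S2 > 0" using i2 Y by (simp add: zero_less_mult_iff)
  have "Re T' = 4 powr g * (cmod q1)^2 * ((Im S2 - Im S1) / 2)"
    unfolding T'_def by (simp add: mult.assoc qq)
  also have "\<dots> > 0" using q1nz s1 s2 by (intro mult_pos_pos) auto
  finally show ?thesis using dR by auto
qed


theorem lemma3p7:
  fixes n k :: nat and \<gamma> :: real
  assumes "0 < \<gamma>" and "\<gamma> < real n / 2"
    and "1 \<le> k" and "real k < real n / 2 - \<gamma>"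
  defines "a\<^sub>0 \<equiv> (real n - real k - 2) / 2"
  shows "(\<forall>a \<beta>. a \<ge> a\<^sub>0 \<and> 0 < \<beta> \<and> \<beta> \<le> real k / 2 \<longrightarrow>
            (\<exists>D. ((\<lambda>x. Re (Theta \<gamma> x (of_real \<beta> * \<i>))) has_real_derivative D) (at a) \<and> D > 0))
       \<and> (\<forall>a \<beta>. a \<ge> a\<^sub>0 \<and> 0 < \<beta> \<and> \<beta> \<le> real k / 2 \<longrightarrow>
            (\<exists>D. ((\<lambda>y. Re (Theta \<gamma> a (of_real y * \<i>))) has_real_derivative D) (at \<beta>) \<and> D < 0))
       \<and> (\<forall>a b. a \<ge> a\<^sub>0 \<and> 0 < b \<longrightarrow>
            (\<exists>D. ((\<lambda>y. Re (Theta \<gamma> a (of_real y))) has_real_derivative D) (at b) \<and> D > 0))"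
proof (intro conjI allI impI)
  have g: "0 < \<gamma>" by fact
  fix a \<beta> :: real assume h: "a\<^sub>0 \<le> a \<and> 0 < \<beta> \<and> \<beta> \<le> real k / 2"
  have u1: "0 < (1-\<gamma>)/2 + (a-\<beta>)/2"
    using conjunct1[OF h] conjunct2[OF h] assms(4) unfolding a\<^sub>0_def by (auto simp: field_simps)
  have u2: "0 < (1-\<gamma>)/2 + (a+\<beta>)/2"
    using conjunct1[OF h] conjunct2[OF h] assms(4) unfolding a\<^sub>0_def by (auto simp: field_simps)
  show "\<exists>D. ((\<lambda>x. Re (Theta \<gamma> x (of_real \<beta> * \<i>))) has_real_derivative D) (at a) \<and> D > 0"
    using real_parts(1)[OF g u1 u2] h by blast
next
  have g: "0 < \<gamma>" by fact
  fix a \<beta> :: real assume h: "a\<^sub>0 \<le> a \<and> 0 < \<beta> \<and> \<beta> \<le> real k / 2"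
  have u1: "0 < (1-\<gamma>)/2 + (a-\<beta>)/2"
    using conjunct1[OF h] conjunct2[OF h] assms(4) unfolding a\<^sub>0_def by (auto simp: field_simps)
  have u2: "0 < (1-\<gamma>)/2 + (a+\<beta>)/2"
    using conjunct1[OF h] conjunct2[OF h] assms(4) unfolding a\<^sub>0_def by (auto simp: field_simps)
  show "\<exists>D. ((\<lambda>y. Re (Theta \<gamma> a (of_real y * \<i>))) has_real_derivative D) (at \<beta>) \<and> D < 0"
    using real_parts(2)[OF g u1 u2] h by blast
next
  have g: "0 < \<gamma>" by fact
  fix a b :: real assume h: "a\<^sub>0 \<le> a \<and> 0 < b"
  have x0: "0 < (1-\<gamma>)/2 + a/2"
    using conjunct1[OF h] conjunct2[OF h] assms(4) unfolding a\<^sub>0_def by (auto simp: field_simps)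
  show "\<exists>D. ((\<lambda>y. Re (Theta \<gamma> a (of_real y))) has_real_derivative D) (at b) \<and> D > 0"
    using complex_part[OF g x0] h by blast
qed

end
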